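(* Let $n\ge 1$, $\mathbb{K}$ a field, $S=\mathbb{K}[x_1,\dots,x_n]$, and \[M_n^{(1)}=\langle x_i^{\,n} : 1\le i\le n\rangle+\langle x_i^{\,n-1}x_j^{\,n-1} : 1\le i<j\le n\rangle\subset S .\] Let $\tilde{\mathcal Q}_{K_{n+1}}$ be the reduced signless Laplacian of the complete graph $K_{n+1}$, i.e. the $n\times n$ matrix with every diagonal entry equal to $n$ and every off-diagonal entry equal to $1$. Then \[\dim_{\mathbb{K}} S/M_n^{(1)}=\det \tilde{\mathcal Q}_{K_{n+1}} .\]
   Context: For a simple graph $G$ on vertex set $\{0,1,\dots,n\}$, the signless Laplacian $\mathcal Q_G$ is the $(n+1)\times(n+1)$ matrix with $(\mathcal Q_G)_{ii}=\deg(i)$ and, for $i\ne j$, $(\mathcal Q_G)_{ij}$ equal to the number of edges between $i$ and $j$; the reduced signless Laplacian $\tilde{\mathcal Q}_G$ is obtained by deleting the row and column of vertex $0$. The ideal $M_n^{(1)}$ is the $1$-skeleton ideal of $K_{n+1}$ (generated by $m_\sigma=\prod_{i\in\sigma}x_i^{\#\{j\notin\sigma:\ j\sim i\}}$ for $\sigma\subseteq\{1,\dots,n\}$, $1\le|\sigma|\le2$). *)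

theory Defs
  imports "HOL-Library.Poly_Mapping" "Jordan_Normal_Form.Determinant"
begin

text \<open>Multivariate polynomials over a field: finitely supported maps from
monomials (exponent vectors \<open>nat \<Rightarrow>\<^sub>0 nat\<close>) to coefficients.\<close>
type_synonym 'k mpoly = "(nat \<Rightarrow>\<^sub>0 nat) \<Rightarrow>\<^sub>0 'k"

text \<open>The polynomial ring \<open>S = K[x_1,...,x_n]\<close> as the subring of polynomials
involving only the variables \<open>x_1,...,x_n\<close>.\<close>
definition polyring :: "nat \<Rightarrow> ('k::field) mpoly set" where
  "polyring n = {p. \<forall>m \<in> Poly_Mapping.keys p. Poly_Mapping.keys m \<subseteq> {1..n}}"

definition var :: "nat \<Rightarrow> ('k::field) mpoly" where
  "var i = Poly_Mapping.single (Poly_Mapping.single i 1) 1"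

definition const :: "'k::field \<Rightarrow> 'k mpoly" where
  "const c = Poly_Mapping.single 0 c"

definition ideal_gen :: "nat \<Rightarrow> ('k::field) mpoly set \<Rightarrow> 'k mpoly set" where
  "ideal_gen n G = {\<Sum>g\<in>G. h g * g | h. \<forall>g\<in>G. h g \<in> polyring n}"

definition M1 :: "nat \<Rightarrow> ('k::field) mpoly set" where
  "M1 n = ideal_gen n
     ({var i ^ n | i. 1 \<le> i \<and> i \<le> n} \<union>
      {var i ^ (n - 1) * var j ^ (n - 1) | i j. 1 \<le> i \<and> i < j \<and> j \<le> n})"

text \<open>\<open>B\<close> is (a set of representatives of) a \<open>K\<close>-basis of the quotient \<open>S/I\<close>:
the classes of \<open>B\<close> are linearly independent modulo \<open>I\<close> and span \<open>S\<close> modulo \<open>I\<close>;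
distinct elements of \<open>B\<close> represent distinct classes.\<close>
definition quot_basis :: "nat \<Rightarrow> ('k::field) mpoly set \<Rightarrow> 'k mpoly set \<Rightarrow> bool" where
  "quot_basis n I B \<longleftrightarrow> finite B \<and> B \<subseteq> polyring n \<and>
     (\<forall>c. (\<Sum>b\<in>B. const (c b) * b) \<in> I \<longrightarrow> (\<forall>b\<in>B. c b = 0)) \<and>
     (\<forall>f \<in> polyring n. \<exists>c. f - (\<Sum>b\<in>B. const (c b) * b) \<in> I)"

text \<open>\<open>dim_K S/I\<close> (for finite-dimensional quotients).\<close>
definition quot_dim :: "nat \<Rightarrow> ('k::field) mpoly set \<Rightarrow> nat" where
  "quot_dim n I = (THE d. \<exists>B. quot_basis n I B \<and> card B = d)"

definition redQ_complete :: "nat \<Rightarrow> int mat" where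
  "redQ_complete n = mat n n (\<lambda>(i,j). if i = j then int n else 1)"

end

theory Submission
  imports Defs "HOL.Vector_Spaces" "HOL-Library.FuncSet"
begin


lemma det_redQ:
  assumes "n \<ge> 1"
  shows "det (redQ_complete n) = (2 * int n - 1) * (int n - 1) ^ (n - 1)"
proof -
  define A where "A = redQ_complete n"
  define E :: "int mat" where "E = mat n n (\<lambda>(i,j). if i = 0 then 1 else if i = j then 1 else 0)"
  define C :: "int mat" where "C = mat n n (\<lambda>(i,j). if j = 0 then (if i = 0 then 2 * int n - 1 else 1)
      else if i = j then int n - 1 else 0)"
  have A: "A \<in> carrier_mat n n" unfolding A_def redQ_complete_def by simp
  have E: "E \<in> carrier_mat n n" unfolding E_def by simp
  have C: "C \<in> carrier_mat n n" unfolding C_def by simp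
  have detE: "det E = 1"
  proof -
    have "det E = prod_list (diag_mat E)"
      by (rule det_upper_triangular[OF _ E]) (auto simp: upper_triangular_def E_def)
    also have "\<dots> = 1" unfolding prod_list_diag_prod using E by (auto simp: E_def intro!: prod.neutral)
    finally show ?thesis .
  qed
  have detC: "det C = (2 * int n - 1) * (int n - 1) ^ (n - 1)"
  proof -
    have "det C = prod_list (diag_mat C)"
      by (rule det_lower_triangular[OF _ C]) (auto simp: C_def)
    also have "\<dots> = (\<Prod>i = 0..<n. C $$ (i,i))" unfolding prod_list_diag_prod using C by simp
    also have "\<dots> = C $$ (0,0) * (\<Prod>i = 1..<n. C $$ (i,i))"
      using assms by (simp add: prod.atLeast_Suc_lessThan)
    also have "(\<Prod>i = 1..<n. C $$ (i,i)) = (\<Prod>i = 1..<n. int n - 1)"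
      by (rule prod.cong) (auto simp: C_def)
    finally show ?thesis using assms by (simp add: C_def)
  qed
  have eq: "E * A = C * E"
  proof (rule eq_matI)
    fix i j assume i: "i < dim_row (C * E)" and j: "j < dim_col (C * E)"
    hence i: "i < n" and j: "j < n" using C E by auto
    have l: "(E * A) $$ (i,j) = (\<Sum>k = 0..<n. E $$ (i,k) * A $$ (k,j))"
      using i j E A by (simp add: times_mat_def scalar_prod_def)
    have r: "(C * E) $$ (i,j) = (\<Sum>k = 0..<n. C $$ (i,k) * E $$ (k,j))"
      using i j E C by (simp add: times_mat_def scalar_prod_def)
    show "(E * A) $$ (i,j) = (C * E) $$ (i,j)"
    proof (cases "i = 0")
      case True
      have "(\<Sum>k = 0..<n. E $$ (i,k) * A $$ (k,j)) = (\<Sum>k = 0..<n. (if k = j then int n - 1 else 0) + 1)"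
        by (rule sum.cong) (use j in \<open>auto simp: E_def A_def redQ_complete_def True\<close>)
      also have "\<dots> = 2 * int n - 1" using j by (simp add: sum.distrib)
      finally have 1: "(E * A) $$ (i,j) = 2 * int n - 1" using l by simp
      have "(\<Sum>k = 0..<n. C $$ (i,k) * E $$ (k,j)) = (\<Sum>k = 0..<n. if k = 0 then 2 * int n - 1 else 0)"
        by (rule sum.cong) (use j in \<open>auto simp: E_def C_def True\<close>)
      also have "\<dots> = 2 * int n - 1" using assms by simp
      finally show ?thesis using 1 r by simp
    next
      case False
      have "(\<Sum>k = 0..<n. E $$ (i,k) * A $$ (k,j)) = (\<Sum>k = 0..<n. if k = i then A $$ (i,j) else 0)"
        by (rule sum.cong) (use i j in \<open>auto simp: E_def False\<close>)
      also have "\<dots> = (if i = j then int n else 1)" using i j by (simp add: A_def redQ_complete_def)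
      finally have 1: "(E * A) $$ (i,j) = (if i = j then int n else 1)" using l by simp
      have "(\<Sum>k = 0..<n. C $$ (i,k) * E $$ (k,j)) = (\<Sum>k = 0..<n. (if k = 0 then 1 else 0) + (if k = j then (if k = 0 then 0 else C $$ (i,j)) else 0))"
        by (rule sum.cong) (use i j in \<open>auto simp: E_def C_def False\<close>)
      also have "\<dots> = 1 + (if j \<noteq> 0 then C $$ (i,j) else 0)" using assms j by (simp add: sum.distrib)
      also have "\<dots> = (if i = j then int n else 1)" using i j False by (auto simp: C_def)
      finally show ?thesis using 1 r by simp
    qed
  qed (use C E A in auto)
  have "det (E * A) = det (C * E)" by (simp add: eq)
  hence "det E * det A = det C * det E" by (simp add: det_mult[OF E A] det_mult[OF C E])
  thus ?thesis using detE detC A_def by simp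
qed



lemma lookup_const_mult: "Poly_Mapping.lookup (const c * p) k = c * Poly_Mapping.lookup p k"
  unfolding const_def mult_map_scale_conv_mult[symmetric]
  by (simp add: Poly_Mapping.map.rep_eq when_def)

lemma var_pow: "(var i :: 'k::field mpoly) ^ k = Poly_Mapping.single (Poly_Mapping.single i k) 1"
proof (induction k)
  case 0 thus ?case by simp
next
  case (Suc k)
  have "(var i :: 'k mpoly) ^ Suc k = var i * var i ^ k" by simp
  also have "\<dots> = Poly_Mapping.single (Poly_Mapping.single i 1) 1 * Poly_Mapping.single (Poly_Mapping.single i k) 1"
    using Suc by (simp add: var_def)
  also have "\<dots> = Poly_Mapping.single (Poly_Mapping.single i 1 + Poly_Mapping.single i k) 1"
    by (simp add: mult_single)
  also have "Poly_Mapping.single i 1 + Poly_Mapping.single i k = Poly_Mapping.single i (Suc k)"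
    by (simp add: single_add[symmetric])
  finally show ?case .
qed

definition gens :: "nat \<Rightarrow> ('k::field) mpoly set" where
  "gens n = {var i ^ n | i. 1 \<le> i \<and> i \<le> n} \<union>
      {var i ^ (n - 1) * var j ^ (n - 1) | i j. 1 \<le> i \<and> i < j \<and> j \<le> n}"

lemma M1_gens: "M1 n = ideal_gen n (gens n)" unfolding M1_def gens_def by simp

definition stdm :: "nat \<Rightarrow> (nat \<Rightarrow>\<^sub>0 nat) set" where
  "stdm n = {m. Poly_Mapping.keys m \<subseteq> {1..n} \<and> (\<forall>i. Poly_Mapping.lookup m i < n) \<and>
     \<not>(\<exists>i j. i \<in> {1..n} \<and> j \<in> {1..n} \<and> i \<noteq> j \<and> Poly_Mapping.lookup m i = n - 1
         \<and> Poly_Mapping.lookup m j = n - 1)}"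

definition divd :: "(nat \<Rightarrow>\<^sub>0 nat) \<Rightarrow> (nat \<Rightarrow>\<^sub>0 nat) \<Rightarrow> bool" where
  "divd e m \<longleftrightarrow> (\<forall>k. Poly_Mapping.lookup e k \<le> Poly_Mapping.lookup m k)"

lemma finite_gens: "finite (gens n)"
proof -
  have h1: "{var i ^ n | i. 1 \<le> i \<and> i \<le> n} = (\<lambda>i. var i ^ n) ` {1..n}" by auto
  have h2: "{var i ^ (n - 1) * var j ^ (n - 1) | i j. 1 \<le> i \<and> i < j \<and> j \<le> n}
     \<subseteq> (\<lambda>(i,j). var i ^ (n - 1) * var j ^ (n - 1)) ` ({1..n} \<times> {1..n})" by force
  have f1: "finite {var i ^ n | i. 1 \<le> i \<and> i \<le> n}" unfolding h1 by simp
  have f2: "finite {var i ^ (n - 1) * var j ^ (n - 1) | i j. 1 \<le> i \<and> i < j \<and> j \<le> n}"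
    by (rule finite_subset[OF h2]) simp
  show ?thesis unfolding gens_def using f1 f2 by (rule finite_UnI)
qed

lemma gens_form:
  assumes "g \<in> (gens n :: 'k::field mpoly set)"
  shows "\<exists>e. g = Poly_Mapping.single e 1 \<and> (\<forall>m. divd e m \<longrightarrow> m \<notin> stdm n)"
  using assms unfolding gens_def
proof (elim UnE CollectE exE conjE)
  fix i assume g: "g = var i ^ n" and i: "1 \<le> i" "i \<le> n"
  show ?thesis
  proof (intro exI conjI allI impI)
    show "g = Poly_Mapping.single (Poly_Mapping.single i n) 1" by (simp add: g var_pow)
    fix m assume "divd (Poly_Mapping.single i n) m"
    hence "n \<le> Poly_Mapping.lookup m i" unfolding divd_def by (metis lookup_single_eq)
    thus "m \<notin> stdm n" unfolding stdm_def by (metis (mono_tags, lifting) mem_Collect_eq not_le)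
  qed
next
  fix i j assume g: "g = var i ^ (n - 1) * var j ^ (n - 1)" and i: "1 \<le> i" "i < j" "j \<le> n"
  let ?e = "Poly_Mapping.single i (n - 1) + Poly_Mapping.single j (n - 1)"
  show ?thesis
  proof (intro exI conjI allI impI)
    show "g = Poly_Mapping.single ?e 1" by (simp add: g var_pow mult_single)
    fix m assume d: "divd ?e m"
    have "n - 1 \<le> Poly_Mapping.lookup m i" using d i unfolding divd_def
      by (metis add.right_neutral lookup_add lookup_single_eq lookup_single_not_eq less_irrefl)
    moreover have "n - 1 \<le> Poly_Mapping.lookup m j" using d i unfolding divd_def
      by (metis add.left_neutral lookup_add lookup_single_eq lookup_single_not_eq less_irrefl)
    ultimately show "m \<notin> stdm n"
    proof (intro notI)
      assume a1: "n - 1 \<le> Poly_Mapping.lookup m i" and a2: "n - 1 \<le> Poly_Mapping.lookup m j"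
        and ms: "m \<in> stdm n"
      hence "Poly_Mapping.lookup m i < n" "Poly_Mapping.lookup m j < n" unfolding stdm_def by auto
      hence "Poly_Mapping.lookup m i = n - 1" "Poly_Mapping.lookup m j = n - 1" using a1 a2 by auto
      moreover have "i \<in> {1..n}" "j \<in> {1..n}" "i \<noteq> j" using i by auto
      ultimately show False using ms unfolding stdm_def by blast
    qed
  qed
qed

lemma gens_cover:
  assumes n1: "n \<ge> 1" and keys: "Poly_Mapping.keys m \<subseteq> {1..n}" and ns: "m \<notin> stdm n"
  shows "\<exists>g\<in>(gens n :: 'k::field mpoly set). \<exists>e. g = Poly_Mapping.single e 1 \<and> divd e m"
proof (cases "\<exists>i. n \<le> Poly_Mapping.lookup m i")
  case True
  then obtain i where i: "n \<le> Poly_Mapping.lookup m i" by auto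
  have "i \<in> Poly_Mapping.keys m" using i n1 by (simp add: in_keys_iff)
  hence "1 \<le> i \<and> i \<le> n" using keys by auto
  hence "(var i ^ n :: 'k mpoly) \<in> gens n" unfolding gens_def by blast
  moreover have "divd (Poly_Mapping.single i n) m" unfolding divd_def
    using i by (auto simp: lookup_single when_def)
  ultimately show ?thesis by (auto simp: var_pow)
next
  case False
  then obtain i j where ij: "i \<in> {1..n}" "j \<in> {1..n}" "i \<noteq> j" "Poly_Mapping.lookup m i = n - 1"
    "Poly_Mapping.lookup m j = n - 1"
  proof -
    have "\<forall>i. Poly_Mapping.lookup m i < n" using False by (simp add: not_le)
    hence "\<exists>i j. i \<in> {1..n} \<and> j \<in> {1..n} \<and> i \<noteq> j \<and> Poly_Mapping.lookup m i = n - 1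
         \<and> Poly_Mapping.lookup m j = n - 1" using ns keys unfolding stdm_def by blast
    thus ?thesis using that by blast
  qed
  define a b where "a = min i j" and "b = max i j"
  have ab: "1 \<le> a" "a < b" "b \<le> n" "Poly_Mapping.lookup m a = n - 1" "Poly_Mapping.lookup m b = n - 1"
    using ij unfolding a_def b_def by (auto simp: min_def max_def)
  hence "(var a ^ (n - 1) * var b ^ (n - 1) :: 'k mpoly) \<in> gens n" unfolding gens_def by blast
  moreover have "divd (Poly_Mapping.single a (n - 1) + Poly_Mapping.single b (n - 1)) m"
    unfolding divd_def using ab by (auto simp: lookup_add lookup_single when_def)
  ultimately show ?thesis by (auto simp: var_pow mult_single)
qed



lemma polyring_zero: "0 \<in> polyring n" by (simp add: polyring_def)

lemma polyring_add: "p \<in> polyring n \<Longrightarrow> q \<in> polyring n \<Longrightarrow> p + q \<in> polyring n"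
proof -
  assume a: "p \<in> polyring n" "q \<in> polyring n"
  have "m \<in> Poly_Mapping.keys p \<union> Poly_Mapping.keys q" if "m \<in> Poly_Mapping.keys (p + q)" for m
    using that keys_add[of p q] by (rule subsetD[rotated])
  thus "p + q \<in> polyring n" using a unfolding polyring_def by blast
qed

lemma ideal_genI: "\<forall>g\<in>G. h g \<in> polyring n \<Longrightarrow> (\<Sum>g\<in>G. h g * g) \<in> ideal_gen n G"
  unfolding ideal_gen_def by blast

lemma ideal_add:
  assumes "p \<in> ideal_gen n G" "q \<in> ideal_gen n G"
  shows "p + q \<in> ideal_gen n G"
proof -
  obtain h1 where p: "p = (\<Sum>g\<in>G. h1 g * g)" and h1: "\<forall>g\<in>G. h1 g \<in> polyring n"
    using assms(1) unfolding ideal_gen_def by blast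
  obtain h2 where q: "q = (\<Sum>g\<in>G. h2 g * g)" and h2: "\<forall>g\<in>G. h2 g \<in> polyring n"
    using assms(2) unfolding ideal_gen_def by blast
  have e: "p + q = (\<Sum>g\<in>G. (h1 g + h2 g) * g)"
    unfolding p q by (simp add: sum.distrib distrib_right)
  have "\<forall>g\<in>G. h1 g + h2 g \<in> polyring n" using h1 h2 polyring_add by blast
  thus ?thesis by (subst e) (rule ideal_genI)
qed

lemma ideal_zero: "0 \<in> ideal_gen n G"
  unfolding ideal_gen_def by (rule CollectI, rule exI[of _ "\<lambda>_. 0"]) (simp add: polyring_zero)

lemma ideal_gen_mult:
  assumes "finite G" "g0 \<in> G" "q \<in> polyring n"
  shows "q * g0 \<in> ideal_gen n G"
proof -
  have "(\<Sum>g\<in>G. (if g = g0 then q else 0) * g) = (\<Sum>g\<in>G. if g = g0 then q * g else 0)"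
    by (rule sum.cong) auto
  also have "\<dots> = q * g0" using assms by simp
  finally have e: "(\<Sum>g\<in>G. (if g = g0 then q else 0) * g) = q * g0" .
  have "\<forall>g\<in>G. (if g = g0 then q else 0) \<in> polyring n" using assms polyring_zero by auto
  thus ?thesis by (subst e[symmetric]) (rule ideal_genI)
qed

lemma ideal_sum:
  assumes "finite A" "\<And>a. a \<in> A \<Longrightarrow> f a \<in> ideal_gen n G"
  shows "sum f A \<in> ideal_gen n G"
  using assms by (induction A rule: finite_induct) (auto intro: ideal_add ideal_zero)

lemma poly_expand: "p = (\<Sum>m\<in>Poly_Mapping.keys p. Poly_Mapping.single m (Poly_Mapping.lookup p m))"
proof (rule poly_mapping_eqI)
  fix k
  have "Poly_Mapping.lookup (\<Sum>m\<in>Poly_Mapping.keys p. Poly_Mapping.single m (Poly_Mapping.lookup p m)) k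
     = (\<Sum>m\<in>Poly_Mapping.keys p. if m = k then Poly_Mapping.lookup p m else 0)"
    unfolding lookup_sum by (rule sum.cong) (auto simp: lookup_single when_def)
  also have "\<dots> = Poly_Mapping.lookup p k"
    by (cases "k \<in> Poly_Mapping.keys p") (simp_all add: in_keys_iff)
  finally show "Poly_Mapping.lookup p k = Poly_Mapping.lookup (\<Sum>m\<in>Poly_Mapping.keys p. Poly_Mapping.single m (Poly_Mapping.lookup p m)) k" by (rule sym)
qed

lemma K1:
  assumes p: "p \<in> (M1 n :: 'k::field mpoly set)" and s: "s \<in> stdm n"
  shows "Poly_Mapping.lookup p s = 0"
proof -
  obtain h where p: "p = (\<Sum>g\<in>gens n. h g * g)"
    using p unfolding M1_gens ideal_gen_def by blast
  have "Poly_Mapping.lookup (h g * g) s = 0" if g: "g \<in> gens n" for g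
  proof (rule ccontr)
    assume nz: "Poly_Mapping.lookup (h g * g) s \<noteq> 0"
    obtain e where e: "g = Poly_Mapping.single e 1" and d: "\<forall>m. divd e m \<longrightarrow> m \<notin> stdm n"
      using gens_form[OF g] by blast
    have "s \<in> Poly_Mapping.keys (h g * g)" using nz by (simp add: in_keys_iff)
    then obtain a b where "s = a + b" "b \<in> Poly_Mapping.keys g" using keys_mult by blast
    hence "s = a + e" using e by (auto split: if_splits)
    hence "divd e s" unfolding divd_def by (simp add: lookup_add)
    thus False using d s by blast
  qed
  thus ?thesis unfolding p by (simp add: lookup_sum)
qed

lemma K2:
  assumes n1: "n \<ge> 1" and p: "p \<in> polyring n" and z: "\<forall>s\<in>stdm n. Poly_Mapping.lookup p s = 0"
  shows "p \<in> (M1 n :: 'k::field mpoly set)"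
proof -
  have "Poly_Mapping.single m (Poly_Mapping.lookup p m) \<in> (M1 n :: 'k mpoly set)"
    if m: "m \<in> Poly_Mapping.keys p" for m
  proof -
    have km: "Poly_Mapping.keys m \<subseteq> {1..n}" using p m unfolding polyring_def by blast
    have "m \<notin> stdm n" using z m by (auto simp: in_keys_iff)
    then obtain g e where g: "g \<in> (gens n :: 'k mpoly set)" and ge: "g = Poly_Mapping.single e 1"
      and d: "divd e m" using gens_cover[OF n1 km] by blast
    have me: "m = (m - e) + e"
      by (rule poly_mapping_eqI) (use d in \<open>simp add: lookup_add lookup_minus divd_def\<close>)
    have "Poly_Mapping.keys (m - e) \<subseteq> Poly_Mapping.keys m"
      by (auto simp: in_keys_iff lookup_minus)
    hence "Poly_Mapping.single (m - e) (Poly_Mapping.lookup p m) \<in> polyring n"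
      using km unfolding polyring_def by auto
    hence "Poly_Mapping.single (m - e) (Poly_Mapping.lookup p m) * g \<in> (M1 n :: 'k mpoly set)"
      unfolding M1_gens by (rule ideal_gen_mult[OF finite_gens g])
    also have "Poly_Mapping.single (m - e) (Poly_Mapping.lookup p m) * g = Poly_Mapping.single m (Poly_Mapping.lookup p m)"
      unfolding ge mult_single by (simp flip: me)
    finally show ?thesis .
  qed
  hence "(\<Sum>m\<in>Poly_Mapping.keys p. Poly_Mapping.single m (Poly_Mapping.lookup p m)) \<in> (M1 n :: 'k mpoly set)"
    unfolding M1_gens by (intro ideal_sum) auto
  thus ?thesis by (rule back_subst[OF _ poly_expand[of p, symmetric]])
qed


definition X :: "(nat \<Rightarrow>\<^sub>0 nat) \<Rightarrow> ('k::field) mpoly" where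
  "X s = Poly_Mapping.single s 1"

definition smul :: "'k::field \<Rightarrow> 'k mpoly \<Rightarrow> 'k mpoly" where
  "smul c p = const c * p"

lemma const_add: "const (a + b) = const a + const b" by (simp add: const_def single_add)
lemma const_mult: "const (a * b) = const a * (const b :: 'k::field mpoly)" by (simp add: const_def mult_single)
lemma const_one: "const 1 = (1 :: 'k::field mpoly)" by (simp add: const_def)

interpretation vs: vector_space "smul :: 'k::field \<Rightarrow> 'k mpoly \<Rightarrow> 'k mpoly"
  by unfold_locales (simp_all add: smul_def const_add const_mult const_one algebra_simps)

lemma lookup_X: "Poly_Mapping.lookup (X s :: 'k::field mpoly) k = (if s = k then 1 else 0)"
  by (simp add: X_def lookup_single when_def)

lemma inj_X: "inj (X :: _ \<Rightarrow> 'k::field mpoly)"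
proof (rule injI)
  fix s t assume "(X s :: 'k mpoly) = X t"
  hence "Poly_Mapping.lookup (X s :: 'k mpoly) s = Poly_Mapping.lookup (X t :: 'k mpoly) s" by simp
  thus "s = t" by (simp add: lookup_X split: if_splits)
qed

lemma keys_X: "Poly_Mapping.keys (X s :: 'k::field mpoly) = {s}"
  by (simp add: X_def)

lemma const_X: "const c * X s = Poly_Mapping.single s c"
  by (simp add: const_def X_def mult_single)


definition Pset :: "nat \<Rightarrow> (nat \<Rightarrow> nat) set" where
  "Pset n = {f \<in> {1..n} \<rightarrow>\<^sub>E {..<n}. \<not>(\<exists>i j. i \<in> {1..n} \<and> j \<in> {1..n} \<and> i \<noteq> j \<and> f i = n - 1 \<and> f j = n - 1)}"

lemma stdm_bij:
  assumes n1: "n \<ge> 1"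
  shows "bij_betw (\<lambda>m. restrict (Poly_Mapping.lookup m) {1..n}) (stdm n) (Pset n)"
proof (rule bij_betw_imageI)
  show "inj_on (\<lambda>m. restrict (Poly_Mapping.lookup m) {1..n}) (stdm n)"
  proof (rule inj_onI)
    fix m1 m2 assume m: "m1 \<in> stdm n" "m2 \<in> stdm n"
      and eq: "restrict (Poly_Mapping.lookup m1) {1..n} = restrict (Poly_Mapping.lookup m2) {1..n}"
    show "m1 = m2"
    proof (rule poly_mapping_eqI)
      fix k
      show "Poly_Mapping.lookup m1 k = Poly_Mapping.lookup m2 k"
      proof (cases "k \<in> {1..n}")
        case True thus ?thesis using fun_cong[OF eq, of k] by simp
      next
        case False
        hence "k \<notin> Poly_Mapping.keys m1" "k \<notin> Poly_Mapping.keys m2" using m unfolding stdm_def by auto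
        thus ?thesis by (simp add: in_keys_iff)
      qed
    qed
  qed
  show "(\<lambda>m. restrict (Poly_Mapping.lookup m) {1..n}) ` stdm n = Pset n"
  proof
    show "(\<lambda>m. restrict (Poly_Mapping.lookup m) {1..n}) ` stdm n \<subseteq> Pset n"
      unfolding stdm_def Pset_def by (auto simp: PiE_iff; blast)
    show "Pset n \<subseteq> (\<lambda>m. restrict (Poly_Mapping.lookup m) {1..n}) ` stdm n"
    proof
      fix f assume f: "f \<in> Pset n"
      define g where "g = (\<lambda>i. if i \<in> {1..n} then f i else 0)"
      have fin: "finite {i. g i \<noteq> 0}" by (rule finite_subset[of _ "{1..n}"]) (auto simp: g_def)
      define m where "m = Abs_poly_mapping g"
      have lm: "Poly_Mapping.lookup m = g" unfolding m_def using fin by simp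
      have k: "Poly_Mapping.keys m \<subseteq> {1..n}" by (auto simp: lm g_def in_keys_iff split: if_splits)
      have l: "\<forall>i. Poly_Mapping.lookup m i < n" using f n1 by (auto simp: lm g_def Pset_def PiE_iff)
      have nt: "\<not>(\<exists>i j. i \<in> {1..n} \<and> j \<in> {1..n} \<and> i \<noteq> j \<and> Poly_Mapping.lookup m i = n - 1
         \<and> Poly_Mapping.lookup m j = n - 1)" using f by (simp add: lm g_def Pset_def)
      have "m \<in> stdm n" unfolding stdm_def using k l nt by blast
      moreover have "f = restrict (Poly_Mapping.lookup m) {1..n}"
        using f by (auto simp: lm g_def Pset_def PiE_iff extensional_def restrict_def)
      ultimately show "f \<in> (\<lambda>m. restrict (Poly_Mapping.lookup m) {1..n}) ` stdm n" by blast
    qed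
  qed
qed

lemma Pset_split:
  assumes n1: "n \<ge> 1"
  shows "Pset n = ({1..n} \<rightarrow>\<^sub>E {..<n-1}) \<union>
     (\<Union>i\<in>{1..n}. PiE {1..n} (\<lambda>j. if j = i then {n - 1} else {..<n-1}))"
proof
  show "Pset n \<subseteq> ({1..n} \<rightarrow>\<^sub>E {..<n-1}) \<union>
     (\<Union>i\<in>{1..n}. PiE {1..n} (\<lambda>j. if j = i then {n - 1} else {..<n-1}))"
  proof
    fix f assume f: "f \<in> Pset n"
    hence fe: "f \<in> extensional {1..n}" and fl: "\<forall>j\<in>{1..n}. f j < n"
      and nt: "\<not>(\<exists>i j. i \<in> {1..n} \<and> j \<in> {1..n} \<and> i \<noteq> j \<and> f i = n - 1 \<and> f j = n - 1)"
      unfolding Pset_def by (auto simp: PiE_iff)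
    show "f \<in> ({1..n} \<rightarrow>\<^sub>E {..<n-1}) \<union>
     (\<Union>i\<in>{1..n}. PiE {1..n} (\<lambda>j. if j = i then {n - 1} else {..<n-1}))"
    proof (cases "\<exists>i\<in>{1..n}. f i = n - 1")
      case True
      then obtain i where i: "i \<in> {1..n}" "f i = n - 1" by blast
      have "f \<in> PiE {1..n} (\<lambda>j. if j = i then {n - 1} else {..<n-1})"
      proof (unfold PiE_iff, intro conjI ballI fe)
        fix j assume j: "j \<in> {1..n}"
        show "f j \<in> (if j = i then {n - 1} else {..<n-1})"
        proof (cases "j = i")
          case False
          hence a: "f j \<noteq> n - 1" using nt i j by blast
          have "f j < n" using fl j by blast
          thus ?thesis using a False by auto
        qed (use i in auto)
      qed
      thus ?thesis using i by blast
    next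
      case False
      have "f \<in> {1..n} \<rightarrow>\<^sub>E {..<n-1}"
      proof (unfold PiE_iff, intro conjI ballI fe)
        fix j assume j: "j \<in> {1..n}"
        have a: "f j < n" using fl j by blast
        have "f j \<noteq> n - 1" using False j by blast
        thus "f j \<in> {..<n-1}" using a by auto
      qed
      thus ?thesis by blast
    qed
  qed
  show "({1..n} \<rightarrow>\<^sub>E {..<n-1}) \<union>
     (\<Union>i\<in>{1..n}. PiE {1..n} (\<lambda>j. if j = i then {n - 1} else {..<n-1})) \<subseteq> Pset n"
  proof
    fix f assume "f \<in> ({1..n} \<rightarrow>\<^sub>E {..<n-1}) \<union>
     (\<Union>i\<in>{1..n}. PiE {1..n} (\<lambda>j. if j = i then {n - 1} else {..<n-1}))"
    thus "f \<in> Pset n"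
    proof (elim UnE UN_E)
      assume f: "f \<in> {1..n} \<rightarrow>\<^sub>E {..<n-1}"
      hence fl: "\<forall>j\<in>{1..n}. f j < n - 1" and fe: "f \<in> extensional {1..n}" by (auto simp: PiE_iff)
      have "f \<in> {1..n} \<rightarrow>\<^sub>E {..<n}" using fl fe by (auto simp: PiE_iff)
      moreover have "\<not>(\<exists>i j. i \<in> {1..n} \<and> j \<in> {1..n} \<and> i \<noteq> j \<and> f i = n - 1 \<and> f j = n - 1)"
        using fl by fastforce
      ultimately show ?thesis unfolding Pset_def by blast
    next
      fix i assume i: "i \<in> {1..n}" and f: "f \<in> PiE {1..n} (\<lambda>j. if j = i then {n - 1} else {..<n-1})"
      have "\<forall>j\<in>{1..n}. f j \<in> (if j = i then {n - 1} else {..<n-1})" and fe: "f \<in> extensional {1..n}"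
        using f by (auto simp: PiE_iff)
      hence fj: "\<And>j. j \<in> {1..n} \<Longrightarrow> j \<noteq> i \<Longrightarrow> f j < n - 1" and fi: "f i = n - 1" using i by fastforce+
      have "f \<in> {1..n} \<rightarrow>\<^sub>E {..<n}"
        unfolding PiE_iff using fe fj fi n1 by (metis One_nat_def Suc_pred diff_less lessThan_iff less_Suc_eq zero_less_one order.strict_trans2)
      moreover have "\<not>(\<exists>i j. i \<in> {1..n} \<and> j \<in> {1..n} \<and> i \<noteq> j \<and> f i = n - 1 \<and> f j = n - 1)"
        using fj by (metis less_irrefl)
      ultimately show ?thesis unfolding Pset_def by blast
    qed
  qed
qed

lemma card_Pset:
  assumes n1: "n \<ge> 1"
  shows "card (Pset n) = (n - 1) ^ n + n * (n - 1) ^ (n - 1)" and "finite (Pset n)"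
proof -
  let ?P0 = "{1..n} \<rightarrow>\<^sub>E {..<n-1}"
  let ?Q = "\<lambda>i. PiE {1..n} (\<lambda>j. if j = i then {n - 1} else {..<n-1})"
  have c0: "card ?P0 = (n - 1) ^ n" by (simp add: card_PiE)
  have cq: "card (?Q i) = (n - 1) ^ (n - 1)" if i: "i \<in> {1..n}" for i
  proof -
    have "card (?Q i) = (\<Prod>j\<in>{1..n}. card (if j = i then {n - 1} else {..<n-1}))" by (simp add: card_PiE)
    also have "\<dots> = (\<Prod>j\<in>{1..n}. if j = i then 1 else n - 1)" by (rule prod.cong) auto
    also have "\<dots> = (\<Prod>j\<in>{1..n} - {i}. if j = i then 1 else n - 1)"
      using i by (subst prod.remove[of _ i]) auto
    also have "\<dots> = (\<Prod>j\<in>{1..n} - {i}. n - 1)" by (rule prod.cong) auto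
    also have "\<dots> = (n - 1) ^ (n - 1)" using i by simp
    finally show ?thesis .
  qed
  have fq: "finite (?Q i)" for i by (rule finite_PiE) auto
  have f0: "finite ?P0" by (rule finite_PiE) auto
  have disj: "?Q i \<inter> ?Q j = {}" if "i \<in> {1..n}" "j \<in> {1..n}" "i \<noteq> j" for i j
  proof (rule ccontr)
    assume "?Q i \<inter> ?Q j \<noteq> {}"
    then obtain f where "f \<in> ?Q i" "f \<in> ?Q j" by blast
    hence "f i = n - 1" "f i < n - 1" using that by (auto simp: PiE_iff dest!: bspec[of _ _ i])
    thus False by simp
  qed
  have cU: "card (\<Union>i\<in>{1..n}. ?Q i) = n * (n - 1) ^ (n - 1)"
    by (subst card_UN_disjoint) (use fq disj cq in auto)
  have d0: "?P0 \<inter> (\<Union>i\<in>{1..n}. ?Q i) = {}"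
  proof (rule ccontr)
    assume "?P0 \<inter> (\<Union>i\<in>{1..n}. ?Q i) \<noteq> {}"
    then obtain f i where "f \<in> ?P0" "i \<in> {1..n}" "f \<in> ?Q i" by blast
    hence "f i = n - 1" "f i < n - 1" by (auto simp: PiE_iff dest!: bspec[of _ _ i])
    thus False by simp
  qed
  show "card (Pset n) = (n - 1) ^ n + n * (n - 1) ^ (n - 1)"
    unfolding Pset_split[OF n1] by (subst card_Un_disjoint) (use f0 fq d0 c0 cU in auto)
  show "finite (Pset n)" unfolding Pset_split[OF n1] using f0 fq by auto
qed

lemma card_stdm:
  assumes n1: "n \<ge> 1"
  shows "card (stdm n) = (n - 1) ^ n + n * (n - 1) ^ (n - 1)" and "finite (stdm n)"
  using bij_betw_same_card[OF stdm_bij[OF n1]] card_Pset[OF n1] bij_betw_finite[OF stdm_bij[OF n1]]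
  by auto


definition trunc :: "nat \<Rightarrow> ('k::field) mpoly \<Rightarrow> 'k mpoly" where
  "trunc n p = (\<Sum>s\<in>stdm n. const (Poly_Mapping.lookup p s) * X s)"

lemma lookup_trunc:
  assumes n1: "n \<ge> 1"
  shows "Poly_Mapping.lookup (trunc n p) k = (if k \<in> stdm n then Poly_Mapping.lookup p k else 0)"
proof -
  have "Poly_Mapping.lookup (trunc n p) k = (\<Sum>s\<in>stdm n. if s = k then Poly_Mapping.lookup p s else 0)"
    unfolding trunc_def lookup_sum by (rule sum.cong) (auto simp: lookup_const_mult lookup_X)
  also have "\<dots> = (if k \<in> stdm n then Poly_Mapping.lookup p k else 0)"
    using card_stdm(2)[OF n1] by simp
  finally show ?thesis .
qed

lemma polyring_diff: "p \<in> polyring n \<Longrightarrow> q \<in> polyring n \<Longrightarrow> p - q \<in> polyring n"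
proof -
  assume a: "p \<in> polyring n" "q \<in> polyring n"
  have "m \<in> Poly_Mapping.keys p \<union> Poly_Mapping.keys q" if "m \<in> Poly_Mapping.keys (p - q)" for m
    using that by (auto simp: in_keys_iff lookup_minus)
  thus "p - q \<in> polyring n" using a unfolding polyring_def by blast
qed

lemma polyring_cmult: "p \<in> polyring n \<Longrightarrow> const c * p \<in> polyring n"
proof -
  assume a: "p \<in> polyring n"
  have "m \<in> Poly_Mapping.keys p" if "m \<in> Poly_Mapping.keys (const c * p)" for m
    using that by (auto simp: in_keys_iff lookup_const_mult)
  thus ?thesis using a unfolding polyring_def by blast
qed

lemma polyring_sum: "finite A \<Longrightarrow> (\<And>a. a \<in> A \<Longrightarrow> f a \<in> polyring n) \<Longrightarrow> sum f A \<in> polyring n"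
  by (induction A rule: finite_induct) (auto intro: polyring_add polyring_zero)

lemma X_polyring: "s \<in> stdm n \<Longrightarrow> X s \<in> polyring n"
  unfolding polyring_def stdm_def by (auto simp: keys_X)

lemma trunc_polyring: "trunc n p \<in> polyring n"
proof (cases "finite (stdm n)")
  case True thus ?thesis unfolding trunc_def
    by (auto intro!: polyring_sum polyring_cmult X_polyring)
next
  case False thus ?thesis by (simp add: trunc_def polyring_zero)
qed

lemma trunc_M1: "n \<ge> 1 \<Longrightarrow> p \<in> M1 n \<Longrightarrow> trunc n p = 0"
  by (rule poly_mapping_eqI) (simp add: lookup_trunc K1)

lemma M1_of_trunc: "n \<ge> 1 \<Longrightarrow> p \<in> polyring n \<Longrightarrow> trunc n p = 0 \<Longrightarrow> p \<in> M1 n"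
proof (rule K2)
  assume n1: "n \<ge> 1" and t: "trunc n p = 0"
  show "\<forall>s\<in>stdm n. Poly_Mapping.lookup p s = 0"
  proof
    fix s assume s: "s \<in> stdm n"
    have "Poly_Mapping.lookup (trunc n p) s = 0" using t by simp
    thus "Poly_Mapping.lookup p s = 0" using s by (simp add: lookup_trunc[OF n1])
  qed
qed

lemma trunc_diff: "n \<ge> 1 \<Longrightarrow> trunc n (p - q) = trunc n p - trunc n q"
  by (rule poly_mapping_eqI) (simp add: lookup_trunc lookup_minus)

lemma trunc_lin: "n \<ge> 1 \<Longrightarrow> trunc n (\<Sum>b\<in>B. const (c b) * b) = (\<Sum>b\<in>B. const (c b) * trunc n b)"
  by (rule poly_mapping_eqI) (simp add: lookup_trunc lookup_sum lookup_const_mult)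

lemma trunc_X: "n \<ge> 1 \<Longrightarrow> s \<in> stdm n \<Longrightarrow> trunc n (X s) = X s"
  by (rule poly_mapping_eqI) (auto simp: lookup_trunc lookup_X)

lemma trunc_idem: "n \<ge> 1 \<Longrightarrow> trunc n (p - trunc n p) = 0"
  by (rule poly_mapping_eqI) (simp add: lookup_trunc lookup_minus)


lemma sum_X_image:
  assumes "finite S"
  shows "(\<Sum>b\<in>X ` S. const (c b) * b) = (\<Sum>s\<in>S. const (c (X s)) * (X s :: 'k::field mpoly))"
  by (rule sum.reindex[unfolded comp_def]) (rule inj_on_subset[OF inj_X], simp)

lemma lookup_sum_X:
  assumes "finite S" "s \<in> S"
  shows "Poly_Mapping.lookup (\<Sum>t\<in>S. const (c t) * (X t :: 'k::field mpoly)) s = c s"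
proof -
  have "Poly_Mapping.lookup (\<Sum>t\<in>S. const (c t) * (X t :: 'k::field mpoly)) s = (\<Sum>t\<in>S. if t = s then c t else 0)"
    unfolding lookup_sum by (rule sum.cong) (auto simp: lookup_const_mult lookup_X)
  also have "\<dots> = c s" using assms by simp
  finally show ?thesis .
qed

lemma std_basis:
  assumes n1: "n \<ge> 1"
  shows "quot_basis n (M1 n :: 'k::field mpoly set) (X ` stdm n)"
  unfolding quot_basis_def
proof (intro conjI allI impI ballI)
  have fin: "finite (stdm n)" using card_stdm(2)[OF n1] .
  show "finite ((X :: _ \<Rightarrow> 'k mpoly) ` stdm n)" using fin by simp
  show "(X :: _ \<Rightarrow> 'k mpoly) ` stdm n \<subseteq> polyring n" using X_polyring by blast
  fix c :: "'k mpoly \<Rightarrow> 'k" and b :: "'k mpoly"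
  assume inI: "(\<Sum>b\<in>X ` stdm n. const (c b) * (b::'k mpoly)) \<in> (M1 n :: 'k mpoly set)" and b: "b \<in> X ` stdm n"
  then obtain s where s: "s \<in> stdm n" "b = X s" by blast
  have "Poly_Mapping.lookup (\<Sum>b\<in>X ` stdm n. const (c b) * (b::'k mpoly)) s = 0" using K1[OF inI s(1)] .
  thus "c b = 0" unfolding sum_X_image[OF fin] using lookup_sum_X[OF fin s(1), of "\<lambda>t. c (X t)"] s by simp
next
  have fin: "finite (stdm n)" using card_stdm(2)[OF n1] .
  fix f :: "'k mpoly" assume f: "f \<in> polyring n"
  define c where "c = (\<lambda>b::'k mpoly. Poly_Mapping.lookup f (inv_into (stdm n) (X :: _ \<Rightarrow> 'k mpoly) b))"
  have "(\<Sum>b\<in>X ` stdm n. const (c b) * (b::'k mpoly)) = (\<Sum>s\<in>stdm n. const (c (X s)) * (X s :: 'k mpoly))"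
    by (rule sum_X_image[OF fin])
  also have "\<dots> = trunc n f" unfolding trunc_def c_def
    by (rule sum.cong) (auto simp: inv_into_f_f[OF inj_on_subset[OF inj_X]])
  finally have e: "(\<Sum>b\<in>X ` stdm n. const (c b) * (b::'k mpoly)) = trunc n f" .
  have "f - trunc n f \<in> M1 n"
    by (rule M1_of_trunc[OF n1 polyring_diff[OF f trunc_polyring] trunc_idem[OF n1]])
  thus "\<exists>c. f - (\<Sum>b\<in>X ` stdm n. const (c b) * (b::'k mpoly)) \<in> (M1 n :: 'k mpoly set)" using e by metis
qed


lemma const_zero: "const 0 = (0 :: 'k::field mpoly)" by (simp add: const_def)
lemma const_m1: "const (-1) * p = - (p :: 'k::field mpoly)"
  by (simp add: const_def single_uminus)

lemma basis_card:
  assumes n1: "n \<ge> 1" and qb: "quot_basis n (M1 n :: 'k::field mpoly set) B"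
  shows "card B = card (stdm n)"
proof -
  have finB: "finite B" and Bp: "B \<subseteq> polyring n"
    and ind: "\<And>c. (\<Sum>b\<in>B. const (c b) * b) \<in> M1 n \<Longrightarrow> (\<forall>b\<in>B. c b = 0)"
    and sp: "\<And>f. f \<in> polyring n \<Longrightarrow> \<exists>c. f - (\<Sum>b\<in>B. const (c b) * b) \<in> M1 n"
    using qb unfolding quot_basis_def by blast+
  have fin: "finite (stdm n)" using card_stdm(2)[OF n1] .
  define B0 :: "'k mpoly set" where "B0 = X ` stdm n"
  define T where "T = trunc n ` B"
  have sum_poly: "(\<Sum>b\<in>B. const (c b) * b) \<in> polyring n" for c
    by (rule polyring_sum[OF finB]) (use Bp polyring_cmult in blast)
  have inj: "inj_on (trunc n) B"
  proof (rule inj_onI, rule ccontr)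
    fix b1 b2 assume b: "b1 \<in> B" "b2 \<in> B" "trunc n b1 = trunc n b2" "b1 \<noteq> b2"
    define c :: "'k mpoly \<Rightarrow> 'k" where "c = (\<lambda>b. if b = b1 then 1 else if b = b2 then -1 else 0)"
    have "(\<Sum>b\<in>B. const (c b) * b) = (\<Sum>b\<in>B. (if b = b1 then b1 else 0) - (if b = b2 then b2 else 0))"
      by (rule sum.cong) (use b in \<open>auto simp: c_def const_one const_zero const_m1\<close>)
    also have "\<dots> = b1 - b2" using b finB by (simp add: sum_subtractf)
    finally have e: "(\<Sum>b\<in>B. const (c b) * b) = b1 - b2" .
    have "trunc n (b1 - b2) = 0" using b by (simp add: trunc_diff[OF n1])
    hence "(\<Sum>b\<in>B. const (c b) * b) \<in> M1 n" unfolding e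
      by (rule M1_of_trunc[OF n1 polyring_diff, rotated 2]) (use b Bp in auto)
    hence "c b1 = 0" using ind b by blast
    thus False by (simp add: c_def)
  qed
  have finT: "finite T" unfolding T_def using finB by simp
  have indT: "vs.independent T"
  proof (rule vs.independent_if_scalars_zero[OF finT])
    fix f x assume s: "(\<Sum>x\<in>T. smul (f x) x) = 0" and x: "x \<in> T"
    define c where "c = (\<lambda>b. f (trunc n b))"
    have "trunc n (\<Sum>b\<in>B. const (c b) * b) = (\<Sum>b\<in>B. const (c b) * trunc n b)" by (rule trunc_lin[OF n1])
    also have "\<dots> = (\<Sum>x\<in>T. smul (f x) x)" unfolding T_def c_def smul_def
      by (rule sum.reindex[OF inj, unfolded comp_def, symmetric])
    finally have "trunc n (\<Sum>b\<in>B. const (c b) * b) = 0" using s by simp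
    hence "(\<Sum>b\<in>B. const (c b) * b) \<in> M1 n" by (rule M1_of_trunc[OF n1 sum_poly])
    hence "\<forall>b\<in>B. c b = 0" by (rule ind)
    thus "f x = 0" using x unfolding T_def c_def by blast
  qed
  have TspB0: "T \<subseteq> vs.span B0"
  proof
    fix t assume "t \<in> T"
    then obtain b where t: "t = trunc n b" unfolding T_def by blast
    show "t \<in> vs.span B0" unfolding t trunc_def smul_def[symmetric]
    proof (rule vs.span_sum)
      fix s assume "s \<in> stdm n"
      thus "smul (Poly_Mapping.lookup b s) (X s) \<in> vs.span B0"
        by (intro vs.span_scale vs.span_base) (simp add: B0_def)
    qed
  qed
  have B0spT: "B0 \<subseteq> vs.span T"
  proof
    fix x assume "x \<in> B0"
    then obtain s where s: "s \<in> stdm n" "x = X s" unfolding B0_def by blast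
    obtain c where c: "X s - (\<Sum>b\<in>B. const (c b) * b) \<in> M1 n" using sp[OF X_polyring[OF s(1)]] by blast
    have "trunc n (X s - (\<Sum>b\<in>B. const (c b) * b)) = 0" by (rule trunc_M1[OF n1 c])
    hence "X s = (\<Sum>b\<in>B. const (c b) * trunc n b)"
      by (simp add: trunc_diff[OF n1] trunc_lin[OF n1] trunc_X[OF n1 s(1)])
    also have "\<dots> \<in> vs.span T" unfolding smul_def[symmetric]
    proof (rule vs.span_sum)
      fix b assume "b \<in> B"
      thus "smul (c b) (trunc n b) \<in> vs.span T"
        by (intro vs.span_scale vs.span_base) (simp add: T_def)
    qed
    finally show "x \<in> vs.span T" using s by simp
  qed
  have finB0: "finite B0" unfolding B0_def using fin by simp
  have indB0: "vs.independent B0"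
  proof (rule vs.independent_if_scalars_zero[OF finB0])
    fix f x assume sz: "(\<Sum>x\<in>B0. smul (f x) x) = 0" and x: "x \<in> B0"
    then obtain s where s: "s \<in> stdm n" "x = X s" unfolding B0_def by blast
    have "Poly_Mapping.lookup (\<Sum>x\<in>B0. smul (f x) x) s = f (X s)"
      unfolding B0_def smul_def sum_X_image[OF fin] by (rule lookup_sum_X[OF fin s(1)])
    thus "f x = 0" using sz s by simp
  qed
  have "card T \<le> card B0" using vs.independent_span_bound[OF finB0 indT TspB0] by simp
  moreover have "card B0 \<le> card T" using vs.independent_span_bound[OF finT indB0 B0spT] by simp
  moreover have "card T = card B" unfolding T_def by (rule card_image[OF inj])
  moreover have "card B0 = card (stdm n)" unfolding B0_def by (rule card_image[OF inj_on_subset[OF inj_X]]) simp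
  ultimately show ?thesis by linarith
qed


theorem corollary3p4:
  fixes n :: nat
  assumes "n \<ge> 1"
  shows "(\<exists>B. quot_basis n (M1 n :: ('k::field) mpoly set) B) \<and>
         int (quot_dim n (M1 n :: 'k mpoly set)) = det (redQ_complete n)"
proof
  have qb: "quot_basis n (M1 n :: 'k mpoly set) (X ` stdm n)" by (rule std_basis[OF assms])
  thus "\<exists>B. quot_basis n (M1 n :: ('k::field) mpoly set) B" by blast
  have cB: "card ((X :: _ \<Rightarrow> 'k mpoly) ` stdm n) = card (stdm n)"
    by (rule card_image[OF inj_on_subset[OF inj_X]]) simp
  have qd: "quot_dim n (M1 n :: 'k mpoly set) = card (stdm n)"
    unfolding quot_dim_def
  proof (rule the_equality)
    show "\<exists>B. quot_basis n (M1 n :: 'k mpoly set) B \<and> card B = card (stdm n)" using qb cB by blast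
    fix d assume "\<exists>B. quot_basis n (M1 n :: 'k mpoly set) B \<and> card B = d"
    thus "d = card (stdm n)" using basis_card[OF assms] by blast
  qed
  obtain k where k: "n = Suc k" using assms by (cases n) auto
  have "int (card (stdm n)) = int ((n - 1) ^ n + n * (n - 1) ^ (n - 1))" using card_stdm(1)[OF assms] by simp
  also have "\<dots> = (2 * int n - 1) * (int n - 1) ^ (n - 1)" unfolding k by (simp add: algebra_simps)
  also have "\<dots> = det (redQ_complete n)" using det_redQ[OF assms] by simp
  finally show "int (quot_dim n (M1 n :: 'k mpoly set)) = det (redQ_complete n)" using qd by simp
qed

end
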